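(* Let $\gamma\in\,]0,+\infty[$ and let $h\colon\mathbb{R}\to\mathbb{R}\colon v\mapsto\log(1+\exp(-v))$. Then for every $v\in\mathbb{R}$, $$\mathrm{prox}_{\gamma h}(v)=v+\mathrm{W}_{\exp(-v)}\big(\gamma\exp(-v)\big).$$
   Context: For a convex function $\psi\colon\mathbb{R}\to\mathbb{R}$, $\mathrm{prox}_\psi(v)$ is the unique minimizer over $p\in\mathbb{R}$ of $\frac12(p-v)^2+\psi(p)$. Generalized Lambert W function: for $r\in\,]0,+\infty[$ and $x\in\,]0,+\infty[$, $\mathrm{W}_r(x)$ denotes the unique real number $\bar v$ such that $\bar v(\exp(\bar v)+r)=x$ (this solution is positive; it is the branch of the generalized Lambert function taking nonnegative values, which is strictly increasing). *)

theory Defs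
  imports "HOL-Analysis.Analysis"
begin

definition prox :: "(real \<Rightarrow> real) \<Rightarrow> real \<Rightarrow> real" where
  "prox psi v = (THE p. \<forall>q. (1/2) * (p - v)^2 + psi p \<le> (1/2) * (q - v)^2 + psi q)"

text \<open>Generalized Lambert W function: for r > 0, x > 0, the unique real w with w (exp w + r) = x.\<close>
definition genW :: "real \<Rightarrow> real \<Rightarrow> real" where
  "genW r x = (THE w. w * (exp w + r) = x)"

end

theory Submission
  imports Defs
begin

lemma onepexp_pos [simp]: "0 < 1 + exp (x::real)"
  by (smt (verit) exp_gt_zero)

lemma onepexp_nz [simp]: "1 + exp (x::real) \<noteq> 0"
  by (smt (verit) exp_gt_zero)

lemma ln1pexp_neg: "ln (1 + exp (- q)) = ln (1 + exp q) - (q::real)"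
proof -
  have "1 + exp (- q) = (1 + exp q) * exp (- q)"
    by (simp add: distrib_right exp_minus field_simps)
  have "1 + exp q > 0" by (simp add: add_pos_pos)
  then show ?thesis using \<open>1 + exp (- q) = _\<close> by (simp add: ln_mult)
qed

lemma tang:
  fixes p q :: real
  shows "ln (1 + exp (- q)) \<ge> ln (1 + exp (- p)) - (q - p) / (1 + exp p)"
proof -
  define s where "s = exp p / (1 + exp p)"
  define d where "d = q - p"
  have pp: "0 < 1 + exp p" by (simp add: add_pos_pos)
  have s0: "0 \<le> s" "s \<le> 1" unfolding s_def using pp by (simp_all add: divide_le_eq_1)
  have "exp ((1 - s) *\<^sub>R 0 + s *\<^sub>R d) \<le> (1 - s) * exp 0 + s * exp d"
    using convex_onD[OF exp_convex, of s 0 d] s0 by simp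
  then have c: "exp (s * d) \<le> (1 - s) + s * exp d" by simp
  have e: "(1 - s) + s * exp d = (1 + exp q) / (1 + exp p)"
    unfolding s_def d_def using pp by (simp add: field_simps exp_diff)
  have "s * d \<le> ln ((1 + exp q) / (1 + exp p))"
    using c e by (metis add_pos_pos exp_gt_zero exp_le_cancel_iff exp_ln divide_pos_pos zero_less_one)
  also have "\<dots> = ln (1 + exp q) - ln (1 + exp p)"
    by (simp add: ln_div add_pos_pos)
  finally have k: "s * d \<le> ln (1 + exp q) - ln (1 + exp p)" .
  have "d - d / (1 + exp p) = s * d" unfolding s_def
    by (simp add: field_simps add_pos_pos)
  then show ?thesis using k unfolding ln1pexp_neg d_def by linarith
qed

theorem proposition2:
  fixes gamma :: real and h :: "real \<Rightarrow> real"
  assumes "gamma > 0"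
    and "\<And>v. h v = ln (1 + exp (- v))"
  shows "\<forall>v::real. prox (\<lambda>p. gamma * h p) v = v + genW (exp (- v)) (gamma * exp (- v))"
proof
  fix v :: real
  define r where "r = exp (- v)"
  have r0: "r > 0" unfolding r_def by simp
  define F where "F = (\<lambda>w::real. w * (exp w + r))"
  have "\<exists>w\<ge>0. w \<le> gamma \<and> F w = gamma * r"
  proof (rule IVT)
    show "F 0 \<le> gamma * r" using assms(1) r0 by (simp add: F_def)
    show "gamma * r \<le> F gamma" using assms(1) by (simp add: F_def distrib_left)
    show "0 \<le> gamma" using assms(1) by simp
    show "\<forall>x. 0 \<le> x \<and> x \<le> gamma \<longrightarrow> isCont F x" unfolding F_def by (auto intro!: continuous_intros)
  qed
  then obtain w where w0: "w \<ge> 0" and wF: "w * (exp w + r) = gamma * r" unfolding F_def by blast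
  have wpos: "w > 0" using w0 wF assms(1) r0 by (cases "w = 0") auto
  have uniqW: "w' = w" if h': "w' * (exp w' + r) = gamma * r" for w'
  proof -
    have gr: "gamma * r > 0" using assms(1) r0 by simp
    have w'pos: "w' > 0"
    proof (rule ccontr)
      assume "\<not> w' > 0"
      then have "w' * (exp w' + r) \<le> 0" using r0
        by (intro mult_nonpos_nonneg) (auto intro: add_pos_pos[THEN less_imp_le])
      then show False using h' gr by simp
    qed
    have mono: "a * (exp a + r) < b * (exp b + r)" if "0 < a" "a < b" for a b
      using that r0 by (intro mult_strict_mono) auto
    show ?thesis
    proof (rule ccontr)
      assume "w' \<noteq> w"
      then have "w' < w \<or> w < w'" by auto
      then show False using mono[of w' w] mono[of w w'] w'pos wpos h' wF by auto
    qed
  qed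
  have gW: "genW r (gamma * r) = w"
    unfolding genW_def
  proof (rule the_equality)
    show "w * (exp w + r) = gamma * r" by (fact wF)
  next
    fix w' assume "w' * (exp w' + r) = gamma * r"
    then show "w' = w" by (rule uniqW)
  qed
  define p where "p = v + w"
  have key: "w = gamma / (1 + exp p)"
  proof -
    have A: "r * exp v = 1" unfolding r_def by (simp add: exp_minus)
    have B: "exp w * exp v = exp p" unfolding p_def by (simp add: exp_add)
    have "w * (exp p + 1) = w * (exp w * exp v + r * exp v)" using A B by simp
    also have "\<dots> = (w * (exp w + r)) * exp v" by (simp add: algebra_simps)
    also have "\<dots> = gamma * (r * exp v)" using wF by simp
    finally have "w * (exp p + 1) = gamma" using A by simp
    then show ?thesis by (simp add: field_simps add_pos_pos)
  qed
  define f where "f = (\<lambda>q. (1/2) * (q - v)^2 + gamma * h q)"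
  have strict: "f p < f q" if "q \<noteq> p" for q
  proof -
    have t: "h q \<ge> h p - (q - p) / (1 + exp p)" using tang[of p q] assms(2) by simp
    have a: "gamma * h q \<ge> gamma * h p - w * (q - p)"
      using mult_left_mono[OF t, of gamma] assms(1) key by (simp add: algebra_simps)
    have d: "p - v = w" unfolding p_def by simp
    have b: "(1/2) * (q - v)^2 = (1/2) * (p - v)^2 + w * (q - p) + (1/2) * (q - p)^2"
      unfolding d[symmetric] by (simp add: power2_eq_square algebra_simps)
    have c: "(q - p)^2 > 0" using that by simp
    show ?thesis unfolding f_def using a b c by linarith
  qed
  have "prox (\<lambda>p. gamma * h p) v = p"
    unfolding prox_def
  proof (rule the_equality)
    show "\<forall>q. 1 / 2 * (p - v)\<^sup>2 + gamma * h p \<le> 1 / 2 * (q - v)\<^sup>2 + gamma * h q"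
      using strict unfolding f_def by (metis order.order_iff_strict)
    fix p'
    assume "\<forall>q. 1 / 2 * (p' - v)\<^sup>2 + gamma * h p' \<le> 1 / 2 * (q - v)\<^sup>2 + gamma * h q"
    then have "f p' \<le> f p" unfolding f_def by blast
    then show "p' = p" using strict[of p'] by (cases "p' = p") auto
  qed
  then show "prox (\<lambda>p. gamma * h p) v = v + genW (exp (- v)) (gamma * exp (- v))"
    using gW unfolding r_def p_def by simp
qed

end
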